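(* Let $p$ be a prime and $k$ a positive integer. (1) If $p>2$, there are exactly two conjugacy classes of involutions in $\operatorname{Hol}(\mathbb{Z}/p^k\mathbb{Z})$, with representatives $\lambda(1,0)$ and $\lambda(-1,0)$. (2) There are exactly two conjugacy classes of involutions in $\operatorname{Hol}(\mathbb{Z}/2\mathbb{Z})$, with representatives $\lambda(1,0),\lambda(1,1)$. (3) There are exactly four conjugacy classes of involutions in $\operatorname{Hol}(\mathbb{Z}/4\mathbb{Z})$, with representatives $\lambda(1,0),\lambda(1,2),\lambda(-1,0),\lambda(-1,1)$. (4) For $k\ge3$ there are exactly six conjugacy classes of involutions in $\operatorname{Hol}(\mathbb{Z}/2^k\mathbb{Z})$, with representatives $\lambda(1,0),\lambda(1,2^{k-1}),\lambda(-1,0),\lambda(-1,1),\lambda(2^{k-1}-1,0),\lambda(2^{k-1}+1,0)$. Consequently, for every positive integer $m$, the number of conjugacy classes of involutions in $\operatorname{Hol}(\mathbb{Z}/m\mathbb{Z})$ is $\min(6,2\nu_2(m))\cdot2^{|\{p>2\text{ prime}:p\mid m\}|}$.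
   Context: $\operatorname{Hol}(\mathbb{Z}/m\mathbb{Z})$ is the group of permutations $\lambda(a,b):x\mapsto ax+b$ of $\mathbb{Z}/m\mathbb{Z}$ with $a$ a unit mod $m$ and $b\in\mathbb{Z}/m\mathbb{Z}$. An involution of a group is an element $g$ with $g^2=1$ (the identity counts as an involution). $\nu_2(m)$ is the exponent of $2$ in $m$. *)

theory Defs
  imports "HOL-Algebra.Group" "HOL-Computational_Algebra.Primes" "HOL-Library.FuncSet"
begin

text \<open>The affine permutation lambda(a,b): x maps to a*x+b of Z/mZ, with Z/mZ
  represented by the residues {0..<m}; outside the carrier the function is
  undefined (restrict), so that equality of maps is equality as permutations.\<close>
definition aff :: "int \<Rightarrow> int \<Rightarrow> int \<Rightarrow> (int \<Rightarrow> int)" where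
  "aff m a b = (\<lambda>x\<in>{0..<m}. (a * x + b) mod m)"

definition Hol :: "int \<Rightarrow> (int \<Rightarrow> int) monoid" where
  "Hol m = \<lparr> carrier = {aff m a b | a b. coprime a m},
             monoid.mult = (\<lambda>f g. compose {0..<m} f g),
             one = aff m 1 0 \<rparr>"

definition involutions :: "('a, 'b) monoid_scheme \<Rightarrow> 'a set" where
  "involutions G = {g \<in> carrier G. g \<otimes>\<^bsub>G\<^esub> g = \<one>\<^bsub>G\<^esub>}"

definition conj_class :: "('a, 'b) monoid_scheme \<Rightarrow> 'a \<Rightarrow> 'a set" where
  "conj_class G g = {inv\<^bsub>G\<^esub> h \<otimes>\<^bsub>G\<^esub> g \<otimes>\<^bsub>G\<^esub> h | h. h \<in> carrier G}"

definition involution_classes :: "('a, 'b) monoid_scheme \<Rightarrow> 'a set set" where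
  "involution_classes G = conj_class G ` involutions G"

end

theory Submission
  imports Defs "HOL-Number_Theory.Cong"
begin


lemma aff_cong:
  assumes "[a = a'] (mod m)" "[b = b'] (mod m)"
  shows "aff m a b = aff m a' b'"
proof -
  have "[a*x+b = a'*x+b'] (mod m)" for x
    using assms by (intro cong_add cong_mult cong_refl)
  then have "(a*x+b) mod m = (a'*x+b') mod m" for x by (simp add: cong_def)
  then show ?thesis unfolding aff_def by auto
qed

lemma aff_apply: "x \<in> {0..<m} \<Longrightarrow> aff m a b x = (a*x+b) mod m"
  by (simp add: aff_def)

lemma aff_eq_iff:
  assumes "m > 0"
  shows "aff m a b = aff m a' b' \<longleftrightarrow> [a = a'] (mod m) \<and> [b = b'] (mod m)"
proof
  assume eq: "aff m a b = aff m a' b'"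
  show "[a = a'] (mod m) \<and> [b = b'] (mod m)"
  proof (cases "m = 1")
    case True then show ?thesis by (simp add: cong_def)
  next
    case False
    then have m1: "m > 1" using assms by simp
    have "aff m a b 0 = aff m a' b' 0" "aff m a b 1 = aff m a' b' 1" using eq by auto
    then have h0: "b mod m = b' mod m" and h1: "(a+b) mod m = (a'+b') mod m"
      using m1 by (auto simp: aff_apply)
    then have c0: "[b = b'] (mod m)" and c1: "[a+b = a'+b'] (mod m)" by (auto simp: cong_def)
    have "[(a+b) - b = (a'+b') - b'] (mod m)" by (intro cong_diff c0 c1)
    then show ?thesis using c0 by simp
  qed
next
  assume "[a = a'] (mod m) \<and> [b = b'] (mod m)"
  then show "aff m a b = aff m a' b'" by (intro aff_cong) auto
qed

lemma aff_comp:
  assumes "m > 0"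
  shows "compose {0..<m} (aff m a b) (aff m c d) = aff m (a*c) (a*d+b)"
proof (rule ext)
  fix x
  show "compose {0..<m} (aff m a b) (aff m c d) x = aff m (a*c) (a*d+b) x"
  proof (cases "x \<in> {0..<m}")
    case True
    have r: "(c*x+d) mod m \<in> {0..<m}" using assms by simp
    have "(a * ((c*x+d) mod m) + b) mod m = (a*(c*x+d)+b) mod m"
      by (metis mod_add_left_eq mod_mult_right_eq)
    then show ?thesis using True r
      by (simp add: compose_def aff_apply algebra_simps)
  next
    case False then show ?thesis by (auto simp: compose_def aff_def)
  qed
qed

lemma Hol_mult: "x \<otimes>\<^bsub>Hol m\<^esub> y = compose {0..<m} x y" by (simp add: Hol_def)
lemma Hol_one: "\<one>\<^bsub>Hol m\<^esub> = aff m 1 0" by (simp add: Hol_def)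
lemma Hol_carrier: "carrier (Hol m) = {aff m a b | a b. coprime a m}" by (simp add: Hol_def)

lemma aff_in_Hol: "coprime a m \<Longrightarrow> aff m a b \<in> carrier (Hol m)"
  by (auto simp: Hol_carrier)

lemma inv_exists:
  fixes a m :: int
  assumes "coprime a m"
  obtains a' where "[a*a' = 1] (mod m)" "coprime a' m"
proof -
  obtain a' where h: "[a*a' = 1] (mod m)" using cong_solve_coprime_int[OF assms] by blast
  then have "coprime a' m" by (metis coprime_iff_invertible_int mult.commute)
  then show ?thesis using h that by blast
qed

lemma Hol_group: assumes "m > 0" shows "group (Hol m)"
proof (rule groupI)
  fix x y assume "x \<in> carrier (Hol m)" "y \<in> carrier (Hol m)"
  then obtain a b c d where "x = aff m a b" "y = aff m c d" "coprime a m" "coprime c m"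
    by (auto simp: Hol_carrier)
  then show "x \<otimes>\<^bsub>Hol m\<^esub> y \<in> carrier (Hol m)"
    by (auto simp: Hol_mult aff_comp assms intro!: aff_in_Hol)
next
  show "\<one>\<^bsub>Hol m\<^esub> \<in> carrier (Hol m)" by (auto simp: Hol_one intro!: aff_in_Hol)
next
  fix x y z assume "x \<in> carrier (Hol m)" "y \<in> carrier (Hol m)" "z \<in> carrier (Hol m)"
  then obtain a b c d e f where "x = aff m a b" "y = aff m c d" "z = aff m e f"
    by (auto simp: Hol_carrier)
  then show "x \<otimes>\<^bsub>Hol m\<^esub> y \<otimes>\<^bsub>Hol m\<^esub> z = x \<otimes>\<^bsub>Hol m\<^esub> (y \<otimes>\<^bsub>Hol m\<^esub> z)"
    by (simp add: Hol_mult aff_comp assms algebra_simps)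
next
  fix x assume "x \<in> carrier (Hol m)"
  then obtain a b where "x = aff m a b" by (auto simp: Hol_carrier)
  then show "\<one>\<^bsub>Hol m\<^esub> \<otimes>\<^bsub>Hol m\<^esub> x = x"
    by (simp add: Hol_mult Hol_one aff_comp assms)
next
  fix x assume "x \<in> carrier (Hol m)"
  then obtain a b where x: "x = aff m a b" "coprime a m" by (auto simp: Hol_carrier)
  obtain a' where a': "[a*a' = 1] (mod m)" "coprime a' m" using inv_exists[OF x(2)] by blast
  have "aff m a' (-(a'*b)) \<otimes>\<^bsub>Hol m\<^esub> x = aff m (a'*a) 0"
    using x by (simp add: Hol_mult aff_comp assms)
  also have "\<dots> = \<one>\<^bsub>Hol m\<^esub>" unfolding Hol_one
    by (rule aff_cong) (use a'(1) in \<open>auto simp: mult.commute\<close>)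
  finally show "\<exists>y\<in>carrier (Hol m). y \<otimes>\<^bsub>Hol m\<^esub> x = \<one>\<^bsub>Hol m\<^esub>"
    using a'(2) aff_in_Hol by blast
qed

lemma Hol_inv:
  assumes "m > 0" "coprime c m" "[c*c' = 1] (mod m)" "coprime c' m"
  shows "inv\<^bsub>Hol m\<^esub> (aff m c d) = aff m c' (-(c'*d))"
proof -
  interpret group "Hol m" by (rule Hol_group[OF assms(1)])
  have "aff m c' (-(c'*d)) \<otimes>\<^bsub>Hol m\<^esub> aff m c d = aff m (c'*c) 0"
    by (simp add: Hol_mult aff_comp assms)
  also have "\<dots> = \<one>\<^bsub>Hol m\<^esub>" unfolding Hol_one
    by (rule aff_cong) (use assms(3) in \<open>auto simp: mult.commute\<close>)
  finally show ?thesis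
    by (intro inv_equality) (auto intro!: aff_in_Hol assms)
qed

lemma conj_aff:
  assumes "m > 0" "coprime c m" "[c*c' = 1] (mod m)" "coprime c' m"
  shows "inv\<^bsub>Hol m\<^esub> (aff m c d) \<otimes>\<^bsub>Hol m\<^esub> aff m a b \<otimes>\<^bsub>Hol m\<^esub> aff m c d
     = aff m a (c'*(b+(a-1)*d))"
proof -
  have "inv\<^bsub>Hol m\<^esub> (aff m c d) \<otimes>\<^bsub>Hol m\<^esub> aff m a b \<otimes>\<^bsub>Hol m\<^esub> aff m c d
     = aff m (c'*a*c) (c'*(a*d+b) + - (c'*d))"
    by (simp add: Hol_inv[OF assms] Hol_mult aff_comp assms(1) algebra_simps)
  also have "\<dots> = aff m a (c'*(b+(a-1)*d))"
  proof (rule aff_cong)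
    have "[c'*a*c = a*(c*c')] (mod m)" by (simp add: algebra_simps)
    also have "[a*(c*c') = a*1] (mod m)" by (intro cong_mult cong_refl assms(3))
    finally show "[c'*a*c = a] (mod m)" by simp
    show "[c'*(a*d+b) + - (c'*d) = c'*(b+(a-1)*d)] (mod m)" by (simp add: algebra_simps)
  qed
  finally show ?thesis .
qed




lemma coprime_by_primes:
  fixes c m :: int
  assumes "m \<noteq> 0" "\<And>p. prime p \<Longrightarrow> p dvd m \<Longrightarrow> \<not> p dvd c"
  shows "coprime c m"
proof (rule ccontr)
  assume nc: "\<not> coprime c m"
  have "gcd c m \<noteq> 0" using assms(1) by simp
  moreover have "\<not> is_unit (gcd c m)" using nc by (simp add: coprime_iff_gcd_eq_1 is_unit_gcd)
  ultimately obtain p where "prime p" "p dvd gcd c m" by (rule prime_divisorE)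
  then show False using assms(2) by auto
qed

lemma unit_lift:
  fixes h m c0 :: int
  assumes "m > 0" "h dvd m" "coprime c0 h"
  shows "\<exists>c. [c = c0] (mod h) \<and> coprime c m"
proof -
  define P where "P = {p. prime p \<and> p dvd m \<and> \<not> p dvd c0}"
  have finP: "finite P"
  proof (rule finite_subset)
    show "P \<subseteq> {0..m}" using assms(1) by (auto simp: P_def dest: zdvd_imp_le prime_ge_0_int)
  qed simp
  define t where "t = \<Prod>P"
  define c where "c = c0 + h * t"
  have "coprime c m"
  proof (rule coprime_by_primes)
    show "m \<noteq> 0" using assms by simp
    fix p :: int assume p: "prime p" "p dvd m"
    show "\<not> p dvd c"
    proof (cases "p dvd c0")
      case True
      have "\<not> p dvd h"
        using True assms(3) p(1) by (meson coprime_common_divisor not_prime_unit)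
      moreover have "\<not> p dvd t"
      proof
        assume "p dvd t"
        then obtain q where q: "q \<in> P" "p dvd q" using prime_dvd_prod_iff[OF finP p(1)] by (auto simp: t_def)
        then have "prime q" "\<not> q dvd c0" by (auto simp: P_def)
        with q p have "p = q" using primes_dvd_imp_eq by blast
        with True \<open>\<not> q dvd c0\<close> show False by simp
      qed
      ultimately have "\<not> p dvd h * t" using p(1) prime_dvd_mult_iff by blast
      then show ?thesis using True unfolding c_def using dvd_add_right_iff by blast
    next
      case False
      then have "p \<in> P" using p by (auto simp: P_def)
      then have "p dvd t" unfolding t_def using finP dvd_prodI[of P p "\<lambda>x. x"] by simp
      then have "p dvd h * t" by simp
      then show ?thesis using False unfolding c_def using dvd_add_left_iff by blast
    qed
  qed
  moreover have "[c = c0] (mod h)" unfolding c_def by (simp add: cong_iff_dvd_diff)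
  ultimately show ?thesis by blast
qed

lemma conj_class_self: "group G \<Longrightarrow> g \<in> carrier G \<Longrightarrow> g \<in> conj_class G g"
  unfolding conj_class_def by (rule CollectI, rule exI[of _ "\<one>\<^bsub>G\<^esub>"]) (simp add: group.is_monoid monoid.l_one monoid.r_one monoid.inv_one)

lemma conj_class_conj:
  fixes G (structure)
  assumes G: "group G" and g: "g \<in> carrier G" and h: "h \<in> carrier G"
  shows "conj_class G (inv\<^bsub>G\<^esub> h \<otimes>\<^bsub>G\<^esub> g \<otimes>\<^bsub>G\<^esub> h) = conj_class G g"
proof -
  interpret group G by (rule G)
  have hh: "\<And>y. y \<in> carrier G \<Longrightarrow> h \<otimes> (inv h \<otimes> y) = y"
    using h by (metis inv_closed l_one m_assoc r_inv)
  show ?thesis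
  proof (intro Set.set_eqI iffI)
    fix x assume "x \<in> conj_class G (inv h \<otimes> g \<otimes> h)"
    then obtain k where k: "k \<in> carrier G" "x = inv k \<otimes> (inv h \<otimes> g \<otimes> h) \<otimes> k"
      by (auto simp: conj_class_def)
    then have "x = inv (h \<otimes> k) \<otimes> g \<otimes> (h \<otimes> k)" using g h by (simp add: inv_mult_group m_assoc)
    then show "x \<in> conj_class G g" using k h unfolding conj_class_def by blast
  next
    fix x assume "x \<in> conj_class G g"
    then obtain k where k: "k \<in> carrier G" "x = inv k \<otimes> g \<otimes> k"
      by (auto simp: conj_class_def)
    then have "x = inv (inv h \<otimes> k) \<otimes> (inv h \<otimes> g \<otimes> h) \<otimes> (inv h \<otimes> k)"
      using g h by (simp add: inv_mult_group m_assoc hh)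
    then show "x \<in> conj_class G (inv h \<otimes> g \<otimes> h)" using k h unfolding conj_class_def by blast
  qed
qed

lemma conj_class_eq_iff:
  assumes G: "group G" and g: "g \<in> carrier G" and x: "x \<in> carrier G"
  shows "conj_class G x = conj_class G g \<longleftrightarrow> x \<in> conj_class G g"
proof
  assume "conj_class G x = conj_class G g"
  then show "x \<in> conj_class G g" using conj_class_self[OF G x] by simp
next
  assume "x \<in> conj_class G g"
  then obtain h where "h \<in> carrier G" "x = inv\<^bsub>G\<^esub> h \<otimes>\<^bsub>G\<^esub> g \<otimes>\<^bsub>G\<^esub> h"
    by (auto simp: conj_class_def)
  then show "conj_class G x = conj_class G g" using conj_class_conj[OF G g] by simp
qed

lemma mem_conj_class_aff:
  assumes "m > 0" "coprime a m"
  shows "x \<in> conj_class (Hol m) (aff m a b) \<longleftrightarrow>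
         (\<exists>c' d. coprime c' m \<and> x = aff m a (c'*(b+(a-1)*d)))"
proof
  assume "x \<in> conj_class (Hol m) (aff m a b)"
  then obtain h where "h \<in> carrier (Hol m)" "x = inv\<^bsub>Hol m\<^esub> h \<otimes>\<^bsub>Hol m\<^esub> aff m a b \<otimes>\<^bsub>Hol m\<^esub> h"
    by (auto simp: conj_class_def)
  then obtain c d where h: "h = aff m c d" "coprime c m" and x: "x = inv\<^bsub>Hol m\<^esub> h \<otimes>\<^bsub>Hol m\<^esub> aff m a b \<otimes>\<^bsub>Hol m\<^esub> h"
    by (auto simp: Hol_carrier)
  obtain c' where c': "[c*c' = 1] (mod m)" "coprime c' m" using inv_exists[OF h(2)] by blast
  show "\<exists>c' d. coprime c' m \<and> x = aff m a (c'*(b+(a-1)*d))"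
    using conj_aff[OF assms(1) h(2) c'] x h c' by blast
next
  assume "\<exists>c' d. coprime c' m \<and> x = aff m a (c'*(b+(a-1)*d))"
  then obtain c' d where c': "coprime c' m" and x: "x = aff m a (c'*(b+(a-1)*d))" by blast
  obtain c where c: "[c'*c = 1] (mod m)" "coprime c m" using inv_exists[OF c'] by blast
  have cc: "[c*c' = 1] (mod m)" using c(1) by (simp add: mult.commute)
  have "x = inv\<^bsub>Hol m\<^esub> (aff m c d) \<otimes>\<^bsub>Hol m\<^esub> aff m a b \<otimes>\<^bsub>Hol m\<^esub> aff m c d"
    using conj_aff[OF assms(1) c(2) cc c'] x by simp
  then show "x \<in> conj_class (Hol m) (aff m a b)"
    unfolding conj_class_def using aff_in_Hol[OF c(2)] by blast
qed

lemma invol_aff: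
  assumes "m > 0" "coprime a m"
  shows "aff m a b \<in> involutions (Hol m) \<longleftrightarrow> [a*a = 1] (mod m) \<and> [a*b+b = 0] (mod m)"
  using assms by (simp add: involutions_def aff_in_Hol Hol_mult Hol_one aff_comp aff_eq_iff)




lemma conj_iff:
  fixes m a b a' b' :: int
  assumes m: "m > 0" and a: "coprime a m" and a': "coprime a' m"
  shows "aff m a' b' \<in> conj_class (Hol m) (aff m a b) \<longleftrightarrow>
         [a' = a] (mod m) \<and> gcd b' (gcd (a-1) m) = gcd b (gcd (a-1) m)"
proof -
  define g where "g = gcd (a-1) m"
  have gm: "g dvd m" "g dvd (a-1)" by (auto simp: g_def)
  have gpos: "g > 0" using m by (simp add: g_def)
  show ?thesis
  proof
    assume "aff m a' b' \<in> conj_class (Hol m) (aff m a b)"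
    then obtain c' d where c': "coprime c' m" and eq: "aff m a' b' = aff m a (c'*(b+(a-1)*d))"
      using mem_conj_class_aff[OF m a] by blast
    then have c1: "[a' = a] (mod m)" and c2: "[b' = c'*(b+(a-1)*d)] (mod m)"
      using aff_eq_iff[OF m] by auto
    have "[b' = c'*(b+(a-1)*d)] (mod g)" using c2 gm(1) cong_dvd_modulus by blast
    moreover have "[c'*(b+(a-1)*d) = c'*b] (mod g)"
    proof -
      have "g dvd c'*(a-1)*d" using gm(2) by simp
      then show ?thesis by (simp add: cong_iff_dvd_diff algebra_simps)
    qed
    ultimately have "[b' = c'*b] (mod g)" by (rule cong_trans)
    then have "gcd b' g = gcd (c'*b) g" by (rule cong_gcd_eq)
    also have "\<dots> = gcd b g"
    proof (rule gcd_mult_left_left_cancel)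
      show "coprime g c'" using c' gm(1) by (meson coprime_commute coprime_imp_coprime dvd_trans dvd_refl)
    qed
    finally show "[a' = a] (mod m) \<and> gcd b' (gcd (a-1) m) = gcd b (gcd (a-1) m)"
      using c1 by (simp add: g_def)
  next
    assume asm: "[a' = a] (mod m) \<and> gcd b' (gcd (a-1) m) = gcd b (gcd (a-1) m)"
    define e where "e = gcd b g"
    have ee: "gcd b' g = e" using asm by (simp add: e_def g_def)
    have epos: "e > 0" using gpos by (simp add: e_def)
    obtain \<beta> where \<beta>: "b = e * \<beta>" unfolding e_def by (meson gcd_dvd1 dvd_def)
    obtain \<beta>' where \<beta>': "b' = e * \<beta>'" using ee by (metis gcd_dvd1 dvd_def)
    obtain h where h: "g = e * h" unfolding e_def by (meson gcd_dvd2 dvd_def)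
    have hpos: "h > 0" using h gpos epos by (simp add: zero_less_mult_iff)
    have cop1: "coprime \<beta> h"
    proof -
      have "gcd b g = e * gcd \<beta> h" using \<beta> h epos by (simp add: gcd_mult_left abs_of_pos)
      then have "gcd \<beta> h = 1" using epos gpos unfolding e_def by simp
      then show ?thesis by (simp add: coprime_iff_gcd_eq_1)
    qed
    have cop2: "coprime \<beta>' h"
    proof -
      have "gcd b' g = e * gcd \<beta>' h" using \<beta>' h epos by (simp add: gcd_mult_left abs_of_pos)
      then have "gcd \<beta>' h = 1" using epos ee by simp
      then show ?thesis by (simp add: coprime_iff_gcd_eq_1)
    qed
    obtain \<beta>i where \<beta>i: "[\<beta>*\<beta>i = 1] (mod h)" "coprime \<beta>i h" using inv_exists[OF cop1] by blast
    have hm: "h dvd m" using h gm(1) by (metis dvd_mult_right dvd_trans mult.commute)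
    have "coprime (\<beta>'*\<beta>i) h" using cop2 \<beta>i(2) by simp
    then obtain c' where c': "[c' = \<beta>'*\<beta>i] (mod h)" "coprime c' m"
      using unit_lift[OF m hm] by blast
    have "[c'*\<beta> = \<beta>'*\<beta>i*\<beta>] (mod h)" using c'(1) by (intro cong_mult cong_refl)
    also have "[\<beta>'*\<beta>i*\<beta> = \<beta>'*1] (mod h)"
      using \<beta>i(1) by (metis cong_scalar_left mult.assoc mult.commute)
    finally have "h dvd c'*\<beta> - \<beta>'" by (simp add: cong_iff_dvd_diff)
    then have "e*h dvd e*(c'*\<beta> - \<beta>')" by simp
    then have "g dvd c'*b - b'" using \<beta> \<beta>' h by (simp add: algebra_simps)
    then obtain s where s: "c'*b - b' = g*s" by (auto simp: dvd_def)
    obtain u v where uv: "u*(a-1) + v*m = g" using bezout_int[of "a-1" m] g_def by blast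
    obtain c where c: "[c'*c = 1] (mod m)" "coprime c m" using inv_exists[OF c'(2)] by blast
    define d where "d = - (c*u*s)"
    have "[c'*(b+(a-1)*d) = c'*b - (a-1)*u*s*(c'*c)] (mod m)"
      by (simp add: d_def algebra_simps)
    also have "[c'*b - (a-1)*u*s*(c'*c) = c'*b - (a-1)*u*s*1] (mod m)"
      using c(1) by (intro cong_diff cong_refl cong_mult)
    also have "[c'*b - (a-1)*u*s*1 = b' + m*v*s] (mod m)"
    proof -
      have "c'*b - (a-1)*u*s = b' + m*v*s" using s uv[symmetric] by (simp add: algebra_simps)
      then show ?thesis by simp
    qed
    also have "[b' + m*v*s = b'] (mod m)" by (simp add: cong_iff_dvd_diff)
    finally have "aff m a' b' = aff m a (c'*(b+(a-1)*d))"
      using asm by (intro aff_cong) (auto simp: cong_sym)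
    then show "aff m a' b' \<in> conj_class (Hol m) (aff m a b)"
      using mem_conj_class_aff[OF m a] c'(2) by blast
  qed
qed




definition S :: "int \<Rightarrow> (int \<times> int) set" where
  "S m = {(a,e). 0 \<le> a \<and> a < m \<and> [a*a = 1] (mod m) \<and> e > 0 \<and> e dvd m \<and> e dvd (a-1) \<and> m dvd (a+1)*e}"

lemma finite_S: assumes "m > 0" shows "finite (S m)"
proof (rule finite_subset)
  show "S m \<subseteq> {0..<m} \<times> {0..m}" using assms by (auto simp: S_def dest: zdvd_imp_le)
qed simp

lemma coprime_mod_m: "m > 0 \<Longrightarrow> coprime a m \<Longrightarrow> coprime (a mod m) (m::int)"
  by (metis coprime_commute coprime_mod_right_iff less_irrefl)

lemma class_rep:
  fixes m a b :: int
  assumes m: "m > 0" and a: "coprime a m"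
  shows "conj_class (Hol m) (aff m a b) = conj_class (Hol m) (aff m (a mod m) (gcd b (gcd (a-1) m)))"
proof -
  have G: "group (Hol m)" by (rule Hol_group[OF m])
  have a2: "coprime (a mod m) m" using coprime_mod_m[OF m a] .
  have "aff m (a mod m) (gcd b (gcd (a-1) m)) \<in> conj_class (Hol m) (aff m a b)"
    using conj_iff[OF m a a2] by (simp add: cong_def)
  then have "conj_class (Hol m) (aff m (a mod m) (gcd b (gcd (a-1) m))) = conj_class (Hol m) (aff m a b)"
    using conj_class_eq_iff[OF G aff_in_Hol[OF a] aff_in_Hol[OF a2]] by blast
  then show ?thesis by simp
qed

lemma S_invol:
  assumes m: "m > 0" and ae: "(a,e) \<in> S m"
  shows "coprime a m" "aff m a e \<in> involutions (Hol m)"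
proof -
  have c: "[a*a = 1] (mod m)" using ae by (simp add: S_def)
  then show ca: "coprime a m" using coprime_iff_invertible_int by blast
  have "m dvd (a+1)*e" using ae by (simp add: S_def)
  then have "[a*e+e = 0] (mod m)" by (simp add: cong_0_iff algebra_simps)
  then show "aff m a e \<in> involutions (Hol m)" using invol_aff[OF m ca] c by simp
qed

lemma classes_eq:
  assumes m: "m > 0"
  shows "involution_classes (Hol m) = (\<lambda>(a,e). conj_class (Hol m) (aff m a e)) ` S m"
proof (intro Set.set_eqI iffI)
  fix C assume "C \<in> involution_classes (Hol m)"
  then obtain x where x: "x \<in> involutions (Hol m)" "C = conj_class (Hol m) x"
    by (auto simp: involution_classes_def)
  then obtain a b where ab: "x = aff m a b" "coprime a m"
    by (auto simp: involutions_def Hol_carrier)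
  have cg: "[a*a = 1] (mod m)" "[a*b+b = 0] (mod m)" using invol_aff[OF m ab(2)] x ab by auto
  define g where "g = gcd (a-1) m"
  define e where "e = gcd b g"
  have C: "C = conj_class (Hol m) (aff m (a mod m) e)"
    using x(2) ab class_rep[OF m ab(2)] by (simp add: e_def g_def)
  have amod: "[a mod m = a] (mod m)" by (simp add: cong_def)
  have gpos: "g > 0" using m by (simp add: g_def)
  have "(a mod m, e) \<in> S m"
    unfolding S_def
  proof (intro CollectI case_prodI conjI)
    show "0 \<le> a mod m" "a mod m < m" using m by auto
    show "[a mod m * (a mod m) = 1] (mod m)" using cong_mult[OF amod amod] cg(1) cong_trans by blast
    show "e > 0" using gpos by (simp add: e_def)
    show "e dvd m" unfolding e_def g_def by (meson dvd_trans gcd_dvd2)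
    have "g dvd (a - 1) - m * (a div m)" unfolding g_def by (simp add: dvd_diff)
    moreover have "(a-1) - m*(a div m) = a mod m - 1" by (simp add: minus_div_mult_eq_mod[symmetric] algebra_simps)
    ultimately have "g dvd a mod m - 1" by simp
    then show "e dvd a mod m - 1" unfolding e_def using dvd_trans gcd_dvd2 by blast
    have mb: "m dvd (a+1)*b" using cg(2) by (simp add: cong_0_iff algebra_simps)
    have "m dvd a*a - 1" using cg(1) by (simp add: cong_iff_dvd_diff dvd_diff_commute cong_sym_eq)
    obtain u v where uv: "u*(a-1) + v*m = g" using bezout_int[of "a-1" m] g_def by blast
    have "(a+1)*g = (a+1)*(u*(a-1) + v*m)" using uv by simp
    also have "\<dots> = u*(a*a-1) + m*((a+1)*v)" by (simp add: algebra_simps)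
    finally have "(a+1)*g = u*(a*a-1) + m*((a+1)*v)" .
    then have mg: "m dvd (a+1)*g" using \<open>m dvd a*a - 1\<close> by simp
    obtain x y where xy: "x*b + y*g = e" using bezout_int[of b g] e_def by blast
    have "(a+1)*e = (a+1)*(x*b + y*g)" using xy by simp
    also have "\<dots> = x*((a+1)*b) + y*((a+1)*g)" by (simp add: algebra_simps)
    finally have "(a+1)*e = x*((a+1)*b) + y*((a+1)*g)" .
    then have "m dvd (a+1)*e" using mb mg by simp
    moreover have "(a mod m + 1)*e = (a+1)*e - m*((a div m)*e)"
      by (simp add: minus_div_mult_eq_mod[symmetric] algebra_simps)
    ultimately show "m dvd (a mod m + 1)*e" by simp
  qed
  then show "C \<in> (\<lambda>(a,e). conj_class (Hol m) (aff m a e)) ` S m" using C by blast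
next
  fix C assume "C \<in> (\<lambda>(a,e). conj_class (Hol m) (aff m a e)) ` S m"
  then obtain a e where "(a,e) \<in> S m" "C = conj_class (Hol m) (aff m a e)" by auto
  then show "C \<in> involution_classes (Hol m)"
    using S_invol[OF m] by (auto simp: involution_classes_def)
qed

lemma classes_inj:
  assumes m: "m > 0"
  shows "inj_on (\<lambda>(a,e). conj_class (Hol m) (aff m a e)) (S m)"
proof (rule inj_onI, clarify)
  fix a e a' e'
  assume s1: "(a,e) \<in> S m" and s2: "(a',e') \<in> S m"
    and eq: "conj_class (Hol m) (aff m a e) = conj_class (Hol m) (aff m a' e')"
  have G: "group (Hol m)" by (rule Hol_group[OF m])
  have ca: "coprime a m" and ca': "coprime a' m" using S_invol[OF m s1] S_invol[OF m s2] by auto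
  have "aff m a' e' \<in> conj_class (Hol m) (aff m a e)"
    using eq conj_class_eq_iff[OF G aff_in_Hol[OF ca] aff_in_Hol[OF ca']] by blast
  then have h: "[a' = a] (mod m)" "gcd e' (gcd (a-1) m) = gcd e (gcd (a-1) m)"
    using conj_iff[OF m ca ca'] by auto
  show "a = a' \<and> e = e'"
  proof
    show "a = a'" using h(1) s1 s2 by (simp add: S_def cong_def)
    then have "e dvd gcd (a-1) m" "e' dvd gcd (a-1) m" "e > 0" "e' > 0" using s1 s2 by (auto simp: S_def)
    then have "gcd e (gcd (a-1) m) = e" "gcd e' (gcd (a-1) m) = e'"
      by (simp_all add: gcd_proj1_iff)
    then show "e = e'" using h(2) by simp
  qed
qed

lemma card_classes:
  assumes m: "m > 0"
  shows "card (involution_classes (Hol m)) = card (S m)"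
  using classes_eq[OF m] card_image[OF classes_inj[OF m]] by simp




lemma S_memI:
  "0 \<le> a \<Longrightarrow> a < m \<Longrightarrow> m dvd a*a - 1 \<Longrightarrow> e > 0 \<Longrightarrow> e dvd m \<Longrightarrow> e dvd (a-1) \<Longrightarrow> m dvd (a+1)*e
   \<Longrightarrow> (a,e) \<in> S m"
  by (simp add: S_def cong_iff_dvd_diff)

lemma S_memD:
  "(a,e) \<in> S m \<Longrightarrow> 0 \<le> a \<and> a < m \<and> m dvd a*a - 1 \<and> e > 0 \<and> e dvd m \<and> e dvd (a-1) \<and> m dvd (a+1)*e"
  by (simp add: S_def cong_iff_dvd_diff)

lemma S_2: "S 2 = {(1,1),(1,2)}"
proof (intro Set.set_eqI iffI)
  fix x assume "x \<in> S 2"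
  then obtain a e where x: "x = (a,e)" and s: "(a,e) \<in> S 2" by (cases x) auto
  from S_memD[OF s] have "a \<in> {0..1}" "e \<in> {1..2}" using zdvd_imp_le[of e 2] by auto
  then have "a = 0 \<or> a = 1" "e = 1 \<or> e = 2" by auto
  with S_memD[OF s] show "x \<in> {(1,1),(1,2)}" using x by auto
next
  fix x assume "x \<in> {(1::int,1::int),(1,2)}"
  then show "x \<in> S 2" by (auto intro!: S_memI)
qed

lemma S_4: "S 4 = {(1,2),(1,4),(3,1),(3,2)}"
proof (intro Set.set_eqI iffI)
  fix x assume "x \<in> S 4"
  then obtain a e where x: "x = (a,e)" and s: "(a,e) \<in> S 4" by (cases x) auto
  from S_memD[OF s] have "a \<in> {0..3}" "e \<in> {1..4}" using zdvd_imp_le[of e 4] by auto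
  then have "a = 0 \<or> a = 1 \<or> a = 2 \<or> a = 3" "e = 1 \<or> e = 2 \<or> e = 3 \<or> e = 4" by auto
  with S_memD[OF s] show "x \<in> {(1,2),(1,4),(3,1),(3,2)}" using x by auto
next
  fix x assume "x \<in> {(1::int,2::int),(1,4),(3,1),(3,2)}"
  then show "x \<in> S 4" by (auto intro!: S_memI)
qed




lemma small_mult:
  fixes h x t :: int
  assumes "h > 0" "x = h*t" "-h < x" "x < 2*h"
  shows "t = 0 \<or> t = 1"
proof -
  have "h*(-1) < h*t" using assms by simp
  then have "-1 < t" using assms(1) mult_less_cancel_left_pos by blast
  moreover have "h*t < h*2" using assms by (simp add: mult.commute)
  then have "t < 2" using assms(1) mult_less_cancel_left_pos by blast
  ultimately show ?thesis by auto
qed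

lemma dvd_small:
  fixes h x :: int
  assumes "h > 0" "h dvd x" "-h < x" "x < 2*h"
  shows "x = 0 \<or> x = h"
proof -
  obtain t where t: "x = h*t" using assms(2) by (auto simp: dvd_def)
  have "t = 0 \<or> t = 1" using small_mult[OF assms(1) t assms(3,4)] .
  then show ?thesis using t by auto
qed

lemma S_odd:
  fixes q :: int
  assumes q: "prime q" "q > 2" and k: "k \<ge> 1"
  shows "S (q^k) = {(1, q^k), (q^k - 1, 1)}"
proof -
  define m where "m = q^k"
  have "q^1 \<le> q^k" using k q(2) by (intro power_increasing) auto
  then have mq: "q \<le> m" unfolding m_def by simp
  have m3: "m > 2" using mq q by simp
  have nd2: "\<not> 2 dvd m"
  proof
    assume "2 dvd m"
    then have "2 dvd q" unfolding m_def using prime_dvd_power[of 2 q k] by simp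
    then show False using primes_dvd_imp_eq[OF two_is_prime q(1)] q(2) by simp
  qed
  have "S m = {(1, m), (m - 1, 1)}"
  proof (intro Set.set_eqI iffI)
    fix x assume "x \<in> S m"
    then obtain a e where x: "x = (a,e)" and s: "(a,e) \<in> S m" by (cases x) auto
    note sd = S_memD[OF s]
    have prod: "m dvd (a-1)*(a+1)" using sd by (simp add: algebra_simps)
    show "x \<in> {(1, m), (m - 1, 1)}"
    proof (cases "q dvd a-1")
      case False
      then have "coprime (a-1) m" unfolding m_def using q(1) prime_imp_power_coprime by blast
      then have "coprime m (a-1)" by (simp add: coprime_commute)
      then have "m dvd a+1" using prod coprime_dvd_mult_right_iff[of m "a-1" "a+1"] by simp
      then have "m dvd (a+1) - m" by (simp add: dvd_diff)
      then have "(a+1) - m = 0 \<or> (a+1) - m = m" using dvd_small[of m "(a+1)-m"] sd m3 by auto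
      then have a: "a = m - 1" using sd by auto
      have "e dvd m - (a-1)" using sd by (simp add: dvd_diff)
      then have "e dvd 2" using a by simp
      then have "e \<le> 2" by (simp add: zdvd_imp_le)
      moreover have "e \<noteq> 2" using sd nd2 by auto
      ultimately have "e = 1" using sd by auto
      then show ?thesis using x a by simp
    next
      case True
      have "\<not> q dvd a+1"
      proof
        assume "q dvd a+1"
        then have "q dvd (a+1) - (a-1)" using True by (rule dvd_diff)
        moreover have "(a+1) - (a-1) = 2" by simp
        ultimately have "q dvd 2" by simp
        then show False using primes_dvd_imp_eq[OF q(1) two_is_prime] q(2) by simp
      qed
      then have "coprime (a+1) m" unfolding m_def using q(1) prime_imp_power_coprime by blast
      then have "coprime m (a+1)" by (simp add: coprime_commute)
      then have "m dvd a-1" using prod coprime_dvd_mult_left_iff[of m "a+1" "a-1"] by simp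
      then have "a-1 = 0 \<or> a-1 = m" using dvd_small[of m "a-1"] sd m3 by auto
      then have a: "a = 1" using sd by auto
      have "coprime 2 m" using nd2 two_is_prime prime_imp_coprime by blast
      then have "coprime m 2" by (simp add: coprime_commute)
      moreover have "m dvd 2 * e" using sd a by simp
      ultimately have "m dvd e" using coprime_dvd_mult_right_iff[of m 2 e] by simp
      then have "e = m" using sd by (simp add: zdvd_antisym_nonneg)
      then show ?thesis using x a by simp
    qed
  next
    fix x assume "x \<in> {(1, m), (m - 1, 1)}"
    moreover have "(1,m) \<in> S m" using m3 by (intro S_memI) auto
    moreover have "(m-1,1) \<in> S m"
    proof (intro S_memI)
      have "(m-1)*(m-1) - 1 = m*(m-2)" by (simp add: algebra_simps)
      then show "m dvd (m-1)*(m-1) - 1" by simp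
    qed (use m3 in auto)
    ultimately show "x \<in> S m" by auto
  qed
  then show ?thesis by (simp add: m_def)
qed




lemma cancelc: "(c::int) \<noteq> 0 \<Longrightarrow> c*x dvd c*y \<Longrightarrow> x dvd y" by simp

lemma dvd_witness: "(x::int) = m * k \<Longrightarrow> m dvd x" by simp

lemma S_pow2:
  fixes w :: int
  assumes w: "w = 2^j" "j \<ge> 1"
  shows "S (4*w) = {(1, 2*w), (1, 4*w), (4*w-1, 1), (4*w-1, 2), (2*w+1, 2*w), (2*w-1, 2)}"
proof (intro Set.set_eqI iffI)
  have "(2::int)^1 \<le> 2^j" by (rule power_increasing) (use w in auto)
  then have w2: "w \<ge> 2" using w by simp
  have ew: "2 dvd w" using w by (simp add: dvd_power)
  have pw2: "2*w = 2^(j+1)" using w by simp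
  fix x assume "x \<in> S (4*w)"
  then obtain a e where x: "x = (a,e)" and s: "(a,e) \<in> S (4*w)" by (cases x) auto
  note sd = S_memD[OF s]
  have prod: "4*w dvd (a-1)*(a+1)" using sd by (simp add: algebra_simps)
  have "(2::int) dvd 4*w" by simp
  then have "2 dvd (a-1)*(a+1)" using prod by (rule dvd_trans)
  then have "2 dvd a-1 \<or> 2 dvd a+1" using two_is_prime prime_dvd_mult_iff by blast
  then have "2 dvd a-1"
  proof
    assume "2 dvd a+1"
    then have "2 dvd (a+1) - 2" by (simp add: dvd_diff)
    then show "2 dvd a-1" by (simp add: algebra_simps)
  qed
  then obtain u where u: "a - 1 = 2*u" by (auto simp: dvd_def)
  have "(a-1)*(a+1) = 4*(u*(u+1))" using u by (simp add: algebra_simps)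
  then have wu: "w dvd u*(u+1)" using prod by simp
  have acases: "a = 1 \<or> a = 2*w+1 \<or> a = 2*w-1 \<or> a = 4*w-1"
  proof (cases "2 dvd u")
    case True
    then have "\<not> 2 dvd u+1" by presburger
    then have "coprime (u+1) w" using w prime_imp_power_coprime[of 2 "u+1" j] by simp
    then have "w dvd u" using wu coprime_dvd_mult_left_iff[of w "u+1" u] by (simp add: coprime_commute)
    then have "2*w dvd a-1" using u by simp
    then have "a-1 = 0 \<or> a-1 = 2*w" using dvd_small[of "2*w" "a-1"] sd w2 by auto
    then show ?thesis by auto
  next
    case False
    then have "coprime u w" using w prime_imp_power_coprime[of 2 u j] by simp
    then have "w dvd u+1" using wu coprime_dvd_mult_right_iff[of w u "u+1"] by (simp add: coprime_commute)
    then have "2*w dvd 2*(u+1)" by (rule mult_dvd_mono[OF dvd_refl])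
    moreover have h2: "2*(u+1) = a+1" using u by simp
    ultimately have "2*w dvd a+1" by (simp only:)
    then have "2*w dvd (a+1) - 2*w" by (simp add: dvd_diff)
    then have "(a+1) - 2*w = 0 \<or> (a+1) - 2*w = 2*w" using dvd_small[of "2*w" "(a+1) - 2*w"] sd w2 by auto
    then show ?thesis by auto
  qed
  show "x \<in> {(1, 2*w), (1, 4*w), (4*w-1, 1), (4*w-1, 2), (2*w+1, 2*w), (2*w-1, 2)}"
  proof -
    consider "a = 1" | "a = 2*w+1" | "a = 2*w-1" | "a = 4*w-1" using acases by blast
    then show ?thesis
    proof cases
      case 1
      then have "2*(2*w) dvd 2*e" using sd by (simp add: algebra_simps)
      then have "2*w dvd e" by (rule cancelc[rotated]) simp
      then have "2*w dvd e - 2*w" by (simp add: dvd_diff)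
      then have "e - 2*w = 0 \<or> e - 2*w = 2*w" using dvd_small[of "2*w" "e - 2*w"] sd w2 zdvd_imp_le[of e "4*w"] by auto
      then show ?thesis using x 1 by auto
    next
      case 4
      have "e dvd 4*w" "e dvd a-1" using sd by auto
      then have "e dvd 4*w - (a-1)" by (rule dvd_diff)
      moreover have "4*w - (a-1) = 2" using 4 by simp
      ultimately have "e dvd 2" by (simp only:)
      then have "e \<le> 2" by (simp add: zdvd_imp_le)
      then have "e = 1 \<or> e = 2" using sd by auto
      then show ?thesis using x 4 by auto
    next
      case 2
      have "\<not> 2 dvd w+1" using ew by presburger
      then have cop: "coprime (w+1) (2*w)" using pw2 prime_imp_power_coprime[of 2 "w+1" "j+1"] by simp
      have "2*(2*w) dvd 2*((w+1)*e)" using sd 2 by (simp add: algebra_simps)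
      then have "2*w dvd (w+1)*e" by (rule cancelc[rotated]) simp
      then have "2*w dvd e" using cop coprime_dvd_mult_right_iff[of "2*w" "w+1" e] by (simp add: coprime_commute)
      moreover have "e dvd 2*w" using sd 2 by simp
      ultimately have "e = 2*w" using sd w2 by (simp add: zdvd_antisym_nonneg)
      then show ?thesis using x 2 by auto
    next
      case 3
      have h1: "4*w dvd (a+1)*e" using sd by auto
      have h2: "(a+1)*e = (2*w)*e" "4*w = (2*w)*2" using 3 by simp_all
      have "(2*w)*2 dvd (2*w)*e" using h1 unfolding h2 .
      then have "2 dvd e" by (rule cancelc[rotated]) (use w2 in simp)
      then obtain f where f: "e = 2*f" by (auto simp: dvd_def)
      have "2*f dvd 2*(w-1)" using sd 3 f by (simp add: algebra_simps)
      then have f1: "f dvd w-1" by (rule cancelc[rotated]) simp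
      have "2*f dvd 2*(2*w)" using sd f by (simp add: algebra_simps)
      then have f2: "f dvd 2*w" by (rule cancelc[rotated]) simp
      have "f dvd 2*(w-1)" using f1 by (rule dvd_mult)
      with f2 have "f dvd 2*w - 2*(w-1)" by (rule dvd_diff)
      then have "f dvd 2" by simp
      then have "f \<le> 2" by (simp add: zdvd_imp_le)
      moreover have "f \<noteq> 2"
      proof
        assume "f = 2"
        then have "2 dvd w - 1" using f1 by simp
        then have "2 dvd w - (w - 1)" using ew by (rule dvd_diff[rotated])
        then show False by simp
      qed
      moreover have "f > 0" using sd f by simp
      ultimately have "f = 1" by simp
      then show ?thesis using x 3 f by auto
    qed
  qed
next
  have "(2::int)^1 \<le> 2^j" by (rule power_increasing) (use w in auto)
  then have w2: "w \<ge> 2" using w by simp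
  fix x assume x: "x \<in> {(1, 2*w), (1, 4*w), (4*w-1, 1), (4*w-1, 2), (2*w+1, 2*w), (2*w-1, 2)}"
  have "(1, 2*w) \<in> S (4*w)"
  proof (rule S_memI)
    show "4*w dvd (1+1)*(2*w)" by simp
  qed (use w2 in auto)
  moreover have "(1, 4*w) \<in> S (4*w)" using w2 by (intro S_memI) auto
  moreover have "(4*w-1, 1) \<in> S (4*w)"
  proof (rule S_memI)
    have "(4*w-1)*(4*w-1) - 1 = (4*w)*(4*w-2)" by (simp add: algebra_simps)
    then show "4*w dvd (4*w-1)*(4*w-1) - 1" by (rule dvd_witness)
  qed (use w2 in auto)
  moreover have "(4*w-1, 2) \<in> S (4*w)"
  proof (rule S_memI)
    have "(4*w-1)*(4*w-1) - 1 = (4*w)*(4*w-2)" by (simp add: algebra_simps)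
    then show "4*w dvd (4*w-1)*(4*w-1) - 1" by (rule dvd_witness)
    have "4*w - 1 - 1 = 2*(2*w-1)" by simp
    then show "2 dvd 4*w - 1 - 1" by (rule dvd_witness)
    show "2 dvd 4*w" by simp
    show "4*w dvd (4*w - 1 + 1) * 2" by simp
  qed (use w2 in auto)
  moreover have "(2*w+1, 2*w) \<in> S (4*w)"
  proof (rule S_memI)
    have "(2*w+1)*(2*w+1) - 1 = (4*w)*(w+1)" by (simp add: algebra_simps)
    then show "4*w dvd (2*w+1)*(2*w+1) - 1" by (rule dvd_witness)
    have "(2*w+1+1)*(2*w) = (4*w)*(w+1)" by (simp add: algebra_simps)
    then show "4*w dvd (2*w+1+1)*(2*w)" by (rule dvd_witness)
    have "4*w = (2*w)*2" by simp
    then show "2*w dvd 4*w" by (rule dvd_witness)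
  qed (use w2 in auto)
  moreover have "(2*w-1, 2) \<in> S (4*w)"
  proof (rule S_memI)
    have "(2*w-1)*(2*w-1) - 1 = (4*w)*(w-1)" by (simp add: algebra_simps)
    then show "4*w dvd (2*w-1)*(2*w-1) - 1" by (rule dvd_witness)
    have "(2*w-1+1)*2 = (4*w)*1" by (simp add: algebra_simps)
    then show "4*w dvd (2*w-1+1)*2" by (rule dvd_witness)
    have "2*w-1-1 = 2*(w-1)" by simp
    then show "2 dvd 2*w-1-1" by (rule dvd_witness)
    show "2 dvd 4*w" by simp
  qed (use w2 in auto)
  ultimately show "x \<in> S (4*w)" using x by auto
qed




lemma S_proj:
  fixes m m1 a e :: int
  assumes s: "(a,e) \<in> S m" and m1: "m1 dvd m" "m1 > 0"
  shows "(a mod m1, gcd e m1) \<in> S m1"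
proof -
  note sd = S_memD[OF s]
  have s3: "m dvd a*a-1" "e dvd a-1" "m dvd (a+1)*e" using sd by auto
  have am: "a - a mod m1 = m1 * (a div m1)" by (simp add: minus_mod_eq_mult_div)
  show ?thesis
  proof (rule S_memI)
    show "0 \<le> a mod m1" "a mod m1 < m1" using m1 by auto
    show "gcd e m1 > 0" using m1 by simp
    show "gcd e m1 dvd m1" by simp
    have "m1 dvd a*a - 1" using m1(1) s3(1) by (rule dvd_trans)
    moreover have "a*a - 1 - (a mod m1 * (a mod m1) - 1) = m1 * ((a div m1) * (a + a mod m1))"
    proof -
      have "a*a - 1 - (a mod m1 * (a mod m1) - 1) = (a - a mod m1) * (a + a mod m1)" by (simp add: algebra_simps)
      then show ?thesis using am by simp
    qed
    then have "m1 dvd a*a - 1 - (a mod m1 * (a mod m1) - 1)" by (rule dvd_witness)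
    ultimately have "m1 dvd (a*a - 1) - (a*a - 1 - (a mod m1 * (a mod m1) - 1))" by (rule dvd_diff)
    then show "m1 dvd a mod m1 * (a mod m1) - 1" by simp
    have g1: "gcd e m1 dvd a - 1" using gcd_dvd1[of e m1] s3(2) by (rule dvd_trans)
    have g2: "gcd e m1 dvd a - a mod m1" unfolding am using gcd_dvd2[of e m1] by (rule dvd_mult2)
    have "gcd e m1 dvd (a - 1) - (a - a mod m1)" using g1 g2 by (rule dvd_diff)
    then show "gcd e m1 dvd a mod m1 - 1" by simp
    have h1: "m1 dvd (a+1)*e" using m1(1) s3(3) by (rule dvd_trans)
    have h2: "m1 dvd (a+1)*m1" by simp
    have "m1 dvd gcd ((a+1)*e) ((a+1)*m1)" using h1 h2 by simp
    also have "gcd ((a+1)*e) ((a+1)*m1) = \<bar>a+1\<bar> * gcd e m1" by (simp add: gcd_mult_distrib_int)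
    also have "\<bar>a+1\<bar> * gcd e m1 = \<bar>(a+1) * gcd e m1\<bar>" by (simp add: abs_mult)
    finally have "m1 dvd (a+1) * gcd e m1" by (simp only: dvd_abs_iff)
    moreover have "(a+1) * gcd e m1 - (a mod m1 + 1) * gcd e m1 = m1 * ((a div m1) * gcd e m1)"
    proof -
      have "(a+1) * gcd e m1 - (a mod m1 + 1) * gcd e m1 = (a - a mod m1) * gcd e m1" by (simp add: algebra_simps)
      then show ?thesis using am by simp
    qed
    then have "m1 dvd (a+1) * gcd e m1 - (a mod m1 + 1) * gcd e m1" by (rule dvd_witness)
    ultimately have "m1 dvd (a+1) * gcd e m1 - ((a+1) * gcd e m1 - (a mod m1 + 1) * gcd e m1)" by (rule dvd_diff)
    then show "m1 dvd (a mod m1 + 1) * gcd e m1" by simp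
  qed
qed

lemma gcd_split:
  fixes e m1 m2 :: int
  assumes "e > 0" "e dvd m1*m2" "coprime m1 m2"
  shows "e = gcd e m1 * gcd e m2"
proof -
  have cop: "coprime (gcd e m1) (gcd e m2)"
    using gcd_dvd2 gcd_dvd2 assms(3) by (rule coprime_divisors)
  have d1: "gcd e m1 * gcd e m2 dvd e" using cop by (simp add: divides_mult)
  obtain x y where xy: "x*e + y*m1 = gcd e m1" using bezout_int by blast
  obtain u v where uv: "u*e + v*m2 = gcd e m2" using bezout_int by blast
  have "gcd e m1 * gcd e m2 = e*(x*u*e + x*v*m2 + y*m1*u) + (y*v)*(m1*m2)"
    unfolding xy[symmetric] uv[symmetric] by (simp add: algebra_simps)
  moreover have "e dvd e*(x*u*e + x*v*m2 + y*m1*u) + (y*v)*(m1*m2)"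
    using assms(2) by simp
  ultimately have d2: "e dvd gcd e m1 * gcd e m2" by simp
  show ?thesis using d1 d2 assms(1) by (simp add: zdvd_antisym_nonneg)
qed

lemma card_S_mult:
  fixes m1 m2 :: int
  assumes m1: "m1 > 0" and m2: "m2 > 0" and cop: "coprime m1 m2"
  shows "card (S (m1*m2)) = card (S m1) * card (S m2)"
proof -
  define f where "f = (\<lambda>(a::int, e::int). ((a mod m1, gcd e m1), (a mod m2, gcd e m2)))"
  have "bij_betw f (S (m1*m2)) (S m1 \<times> S m2)"
  proof (rule bij_betwI')
    fix x y assume x: "x \<in> S (m1*m2)" and y: "y \<in> S (m1*m2)"
    obtain a e where ae: "x = (a,e)" by (cases x)
    obtain a' e' where ae': "y = (a',e')" by (cases y)
    show "f x = f y \<longleftrightarrow> x = y"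
    proof
      assume eq: "f x = f y"
      then have c1: "a mod m1 = a' mod m1" "a mod m2 = a' mod m2" and
        c2: "gcd e m1 = gcd e' m1" "gcd e m2 = gcd e' m2"
        by (auto simp: f_def ae ae')
      have "[a = a'] (mod m1*m2)" using c1 cop by (intro coprime_cong_mult) (auto simp: cong_def)
      then have "a = a'" using x y ae ae' by (auto simp: S_def cong_def)
      moreover have "e = e'"
      proof -
        have "e > 0" "e dvd m1*m2" using x ae by (auto simp: S_def)
        then have "e = gcd e m1 * gcd e m2" using cop by (rule gcd_split)
        moreover have "e' > 0" "e' dvd m1*m2" using y ae' by (auto simp: S_def)
        then have "e' = gcd e' m1 * gcd e' m2" using cop by (rule gcd_split)
        ultimately show ?thesis using c2 by simp
      qed
      ultimately show "x = y" using ae ae' by simp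
    qed simp
  next
    fix x assume x: "x \<in> S (m1*m2)"
    obtain a e where ae: "x = (a,e)" by (cases x)
    have "(a mod m1, gcd e m1) \<in> S m1" using S_proj[of a e "m1*m2" m1] x ae m1 by simp
    moreover have "(a mod m2, gcd e m2) \<in> S m2" using S_proj[of a e "m1*m2" m2] x ae m2 by simp
    ultimately show "f x \<in> S m1 \<times> S m2" by (simp add: f_def ae)
  next
    fix z assume z: "z \<in> S m1 \<times> S m2"
    then obtain a1 e1 a2 e2 where z: "z = ((a1,e1),(a2,e2))" "(a1,e1) \<in> S m1" "(a2,e2) \<in> S m2"
      by auto
    obtain x0 where x0: "[x0 = a1] (mod m1)" "[x0 = a2] (mod m2)"
      using binary_chinese_remainder_int[OF cop] by blast
    define a where "a = x0 mod (m1*m2)"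
    define e where "e = e1*e2"
    have ax: "[a = x0] (mod m1*m2)" by (simp add: a_def cong_def)
    have a1: "[a = a1] (mod m1)" using ax x0(1) by (meson cong_dvd_modulus cong_trans dvd_triv_left)
    have a2: "[a = a2] (mod m2)" using ax x0(2) by (meson cong_dvd_modulus cong_trans dvd_triv_right)
    have s1: "0 \<le> a1" "a1 < m1" "[a1*a1 = 1] (mod m1)" "e1 > 0" "e1 dvd m1" "e1 dvd a1 - 1" "m1 dvd (a1+1)*e1"
      using z(2) by (auto simp: S_def)
    have s2: "0 \<le> a2" "a2 < m2" "[a2*a2 = 1] (mod m2)" "e2 > 0" "e2 dvd m2" "e2 dvd a2 - 1" "m2 dvd (a2+1)*e2"
      using z(3) by (auto simp: S_def)
    have ce: "coprime e1 e2" using s1(5) s2(5) cop by (rule coprime_divisors)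
    have ce1: "coprime m1 e2" using dvd_refl s2(5) cop by (rule coprime_divisors)
    have ce2: "coprime m2 e1" using dvd_refl s1(5) cop[unfolded coprime_commute[of m1]] by (rule coprime_divisors)
    have "(a,e) \<in> S (m1*m2)"
      unfolding S_def
    proof (intro CollectI case_prodI conjI)
      show "0 \<le> a" "a < m1*m2" using m1 m2 by (auto simp: a_def)
      have "[a*a = a1*a1] (mod m1)" using a1 by (intro cong_mult)
      then have "[a*a = 1] (mod m1)" using s1(3) by (rule cong_trans)
      moreover have "[a*a = a2*a2] (mod m2)" using a2 by (intro cong_mult)
      then have "[a*a = 1] (mod m2)" using s2(3) by (rule cong_trans)
      ultimately show "[a*a = 1] (mod m1*m2)" using cop by (rule coprime_cong_mult)
      show "e > 0" using s1 s2 by (simp add: e_def)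
      show "e dvd m1*m2" using s1(5) s2(5) by (simp add: e_def mult_dvd_mono)
      have "m1 dvd a - a1" using a1 by (simp add: cong_iff_dvd_diff)
      then have "e1 dvd a - a1" using s1(5) by (rule dvd_trans[rotated])
      then have "e1 dvd (a - a1) + (a1 - 1)" using s1(6) by (rule dvd_add)
      then have ea1: "e1 dvd a - 1" by simp
      have "m2 dvd a - a2" using a2 by (simp add: cong_iff_dvd_diff)
      then have "e2 dvd a - a2" using s2(5) by (rule dvd_trans[rotated])
      then have "e2 dvd (a - a2) + (a2 - 1)" using s2(6) by (rule dvd_add)
      then have ea2: "e2 dvd a - 1" by simp
      show "e dvd a - 1" unfolding e_def using ce ea1 ea2 by (simp add: divides_mult)
      have "m1 dvd (a - a1)*e1" using \<open>m1 dvd a - a1\<close> by (rule dvd_mult2)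
      then have "m1 dvd (a - a1)*e1 + (a1+1)*e1" using s1(7) by (rule dvd_add)
      then have "m1 dvd (a+1)*e1" by (simp add: algebra_simps)
      then have q1: "m1 dvd (a+1)*e" by (simp add: e_def mult.assoc[symmetric])
      have "m2 dvd (a - a2)*e2" using \<open>m2 dvd a - a2\<close> by (rule dvd_mult2)
      then have "m2 dvd (a - a2)*e2 + (a2+1)*e2" using s2(7) by (rule dvd_add)
      then have "m2 dvd (a+1)*e2" by (simp add: algebra_simps)
      then have "m2 dvd ((a+1)*e2)*e1" by (rule dvd_mult2)
      moreover have "((a+1)*e2)*e1 = (a+1)*e" by (simp add: e_def ac_simps)
      ultimately have q2: "m2 dvd (a+1)*e" by (simp only:)
      show "m1*m2 dvd (a+1)*e" using cop q1 q2 by (simp add: divides_mult)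
    qed
    moreover have "f (a,e) = z"
    proof -
      have "a mod m1 = a1" using a1 s1(1,2) by (simp add: cong_def)
      moreover have "a mod m2 = a2" using a2 s2(1,2) by (simp add: cong_def)
      moreover have "gcd e m1 = e1"
      proof -
        have "gcd e m1 = gcd e1 m1" unfolding e_def using ce1 by (rule gcd_mult_left_right_cancel)
        also have "\<dots> = e1" using s1(4,5) by (simp add: gcd_proj1_iff)
        finally show ?thesis .
      qed
      moreover have "gcd e m2 = e2"
      proof -
        have "gcd e m2 = gcd e2 m2" unfolding e_def using ce2 by (rule gcd_mult_left_left_cancel)
        also have "\<dots> = e2" using s2(4,5) by (simp add: gcd_proj1_iff)
        finally show ?thesis .
      qed
      ultimately show ?thesis by (simp add: f_def z(1))
    qed
    ultimately show "\<exists>x\<in>S (m1*m2). z = f x" by metis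
  qed
  then have "card (S (m1*m2)) = card (S m1 \<times> S m2)" by (rule bij_betw_same_card)
  then show ?thesis by (simp add: card_cartesian_product)
qed




lemma S_1: "S 1 = {(0,1)}"
proof (intro Set.set_eqI iffI)
  fix x assume "x \<in> S 1"
  then obtain a e where x: "x = (a,e)" and s: "(a,e) \<in> S 1" by (cases x) auto
  from S_memD[OF s] have "a = 0" "e dvd 1" "e > 0" by auto
  then show "x \<in> {(0,1)}" using x by auto
next
  fix x assume "x \<in> {(0::int,1::int)}"
  then show "x \<in> S 1" by (auto intro!: S_memI)
qed

lemma card_S_odd:
  fixes q :: nat
  assumes "prime q" "q > 2" "j \<ge> 1"
  shows "card (S (int q ^ j)) = 2"
proof -
  have q: "prime (int q)" "int q > 2" using assms by auto
  have "int q ^ 1 \<le> int q ^ j" using assms by (intro power_increasing) auto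
  then have "int q \<le> int q ^ j" by (simp only: power_one_right)
  then have "int q ^ j > 2" using q(2) by linarith
  then show ?thesis using S_odd[OF q assms(3)] by simp
qed

lemma card_S_two:
  assumes "j \<ge> 1"
  shows "card (S (2 ^ j)) = min 6 (2^j)"
proof -
  consider "j = 1" | "j = 2" | "j \<ge> 3" using assms by linarith
  then show ?thesis
  proof cases
    case 1 then show ?thesis by (simp add: S_2)
  next
    case 2 then show ?thesis by (simp add: S_4)
  next
    case 3
    define w :: int where "w = 2^(j-2)"
    have w1: "j - 2 \<ge> 1" using 3 by simp
    have "(2::int)^1 \<le> 2^(j-2)" using w1 by (intro power_increasing) auto
    then have w2: "w \<ge> 2" by (simp add: w_def)
    have jj: "j = 2 + (j-2)" using 3 by simp
    have m: "(2::int)^j = 4*w"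
      by (subst jj) (simp only: power_add w_def, simp)
    have "card (S (2^j)) = 6"
      unfolding m S_pow2[OF w_def w1] using w2 by simp
    moreover have "(2::nat)^3 \<le> 2^j" using 3 by (intro power_increasing) auto
    then have "min 6 ((2::nat)^j) = 6" by simp
    ultimately show ?thesis by simp
  qed
qed

definition OP :: "nat \<Rightarrow> nat set" where
  "OP m = {p. prime p \<and> p > 2 \<and> p dvd m}"

lemma finite_OP: "m > 0 \<Longrightarrow> finite (OP m)"
  by (rule finite_subset[of _ "{..m}"]) (auto simp: OP_def dest: dvd_imp_le)

lemma card_S_formula:
  fixes m :: nat
  assumes "m > 0"
  shows "card (S (int m)) = min 6 (2 ^ multiplicity 2 m) * 2 ^ card (OP m)"
  using assms
proof (induction m rule: less_induct)
  case (less m)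
  show ?case
  proof (cases "m = 1")
    case True
    have "OP 1 = {}" by (auto simp: OP_def)
    then show ?thesis using True by (simp add: S_1)
  next
    case False
    then obtain q where q: "prime q" "q dvd m" using prime_factor_nat by blast
    define j where "j = multiplicity q m"
    have m0: "m > 0" using less.prems .
    have qu: "\<not> is_unit q" using q(1) not_prime_unit by blast
    obtain n where n: "m = q ^ j * n" "\<not> q dvd n"
      using multiplicity_decompose'[of m q] m0 qu unfolding j_def by auto
    have n0: "n > 0" using n m0 by (cases n) auto
    have j1: "j \<ge> 1" unfolding j_def using q m0 by (simp add: prime_multiplicity_gt_zero_iff Suc_le_eq)
    have qj: "q ^ j \<ge> 2"
    proof -
      have "q ^ 1 \<le> q ^ j" using j1 prime_ge_2_nat[OF q(1)] by (intro power_increasing) auto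
      then show ?thesis using prime_ge_2_nat[OF q(1)] by simp
    qed
    have "2*n \<le> q^j * n" using qj by (rule mult_le_mono1)
    then have nm: "n < m" using n(1) n0 by linarith
    have IH: "card (S (int n)) = min 6 (2 ^ multiplicity 2 n) * 2 ^ card (OP n)"
      using less.IH[OF nm n0] .
    have cop: "coprime (q^j) n" using n(2) q(1) prime_imp_power_coprime[of q n j] by (simp add: coprime_commute)
    then have copi: "coprime (int q ^ j) (int n)" by (metis coprime_int_iff of_nat_power)
    have "card (S (int m)) = card (S (int q ^ j)) * card (S (int n))"
    proof -
      have "int m = int q ^ j * int n" using n by simp
      moreover have "int q ^ j > 0" using q prime_gt_0_nat by simp
      ultimately show ?thesis using card_S_mult[OF _ _ copi] n0 by simp
    qed
    also have "\<dots> = min 6 (2 ^ multiplicity 2 m) * 2 ^ card (OP m)"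
    proof (cases "q = 2")
      case True
      have mm: "multiplicity 2 m = j"
      proof -
        have "multiplicity 2 m = multiplicity (2::nat) (2^j) + multiplicity 2 n"
          using n True n0 by (simp add: prime_elem_multiplicity_mult_distrib)
        moreover have "multiplicity 2 n = 0" using n(2) True by (simp add: not_dvd_imp_multiplicity_0)
        ultimately show ?thesis by simp
      qed
      have mn: "multiplicity 2 n = 0" using n(2) True by (simp add: not_dvd_imp_multiplicity_0)
      have op: "OP m = OP n"
      proof (intro Set.set_eqI iffI)
        fix p assume "p \<in> OP m"
        then have p: "prime p" "p > 2" "p dvd 2^j * n" using n True by (auto simp: OP_def)
        have "\<not> p dvd 2^j"
        proof
          assume "p dvd 2^j"
          then have "p dvd 2" using p(1) prime_dvd_power by blast
          then show False using p(2) dvd_imp_le by fastforce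
        qed
        then have "p dvd n" using p prime_dvd_mult_iff by blast
        then show "p \<in> OP n" using p by (auto simp: OP_def)
      next
        fix p assume "p \<in> OP n"
        then show "p \<in> OP m" using n by (auto simp: OP_def)
      qed
      show ?thesis using True IH mm mn op card_S_two[OF j1] by simp
    next
      case False
      have q2: "q > 2" using False prime_ge_2_nat[OF q(1)] by simp
      have mm: "multiplicity 2 m = multiplicity 2 n"
      proof -
        have "\<not> 2 dvd q ^ j"
        proof
          assume "2 dvd q ^ j"
          then have "2 dvd q" using prime_dvd_power two_is_prime_nat by blast
          then show False using False q(1) primes_dvd_imp_eq two_is_prime_nat by blast
        qed
        then have "multiplicity 2 (q^j) = 0" by (simp add: not_dvd_imp_multiplicity_0)
        moreover have "multiplicity 2 m = multiplicity 2 (q^j) + multiplicity 2 n"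
          using n n0 q prime_gt_0_nat by (simp add: prime_elem_multiplicity_mult_distrib)
        ultimately show ?thesis by simp
      qed
      have op: "OP m = insert q (OP n)"
      proof (intro Set.set_eqI iffI)
        fix p assume "p \<in> OP m"
        then have p: "prime p" "p > 2" "p dvd q^j * n" using n by (auto simp: OP_def)
        then have "p dvd q^j \<or> p dvd n" using prime_dvd_mult_iff by blast
        then have "p = q \<or> p dvd n" using p(1) q(1) prime_dvd_power primes_dvd_imp_eq by blast
        then show "p \<in> insert q (OP n)" using p by (auto simp: OP_def)
      next
        fix p assume "p \<in> insert q (OP n)"
        then show "p \<in> OP m" using n q q2 by (auto simp: OP_def)
      qed
      have "q \<notin> OP n" using n(2) by (simp add: OP_def)
      then have "card (OP m) = Suc (card (OP n))" using op finite_OP[OF n0] by simp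
      then show ?thesis using IH mm card_S_odd[OF q(1) q2 j1] by simp
    qed
    finally show ?thesis .
  qed
qed




lemma rep_in_S:
  fixes m a b :: int
  assumes m: "m > 0" and cg: "[a*a = 1] (mod m)" "[a*b+b = 0] (mod m)"
  shows "(a mod m, gcd b (gcd (a-1) m)) \<in> S m"
proof -
  define g where "g = gcd (a-1) m"
  define e where "e = gcd b g"
  have amod: "[a mod m = a] (mod m)" by (simp add: cong_def)
  have gpos: "g > 0" using m by (simp add: g_def)
  have "(a mod m, e) \<in> S m"
    unfolding S_def
  proof (intro CollectI case_prodI conjI)
    show "0 \<le> a mod m" "a mod m < m" using m by auto
    show "[a mod m * (a mod m) = 1] (mod m)" using cong_mult[OF amod amod] cg(1) cong_trans by blast
    show "e > 0" using gpos by (simp add: e_def)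
    show "e dvd m" unfolding e_def g_def by (meson dvd_trans gcd_dvd2)
    have "g dvd (a - 1) - m * (a div m)" unfolding g_def by (simp add: dvd_diff)
    moreover have "(a-1) - m*(a div m) = a mod m - 1" by (simp add: minus_div_mult_eq_mod[symmetric] algebra_simps)
    ultimately have "g dvd a mod m - 1" by simp
    then show "e dvd a mod m - 1" unfolding e_def using dvd_trans gcd_dvd2 by blast
    have mb: "m dvd (a+1)*b" using cg(2) by (simp add: cong_0_iff algebra_simps)
    have "m dvd a*a - 1" using cg(1) by (simp add: cong_iff_dvd_diff dvd_diff_commute cong_sym_eq)
    obtain u v where uv: "u*(a-1) + v*m = g" using bezout_int[of "a-1" m] g_def by blast
    have "(a+1)*g = (a+1)*(u*(a-1) + v*m)" using uv by simp
    also have "\<dots> = u*(a*a-1) + m*((a+1)*v)" by (simp add: algebra_simps)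
    finally have "(a+1)*g = u*(a*a-1) + m*((a+1)*v)" .
    then have mg: "m dvd (a+1)*g" using \<open>m dvd a*a - 1\<close> by simp
    obtain x y where xy: "x*b + y*g = e" using bezout_int[of b g] e_def by blast
    have "(a+1)*e = (a+1)*(x*b + y*g)" using xy by simp
    also have "\<dots> = x*((a+1)*b) + y*((a+1)*g)" by (simp add: algebra_simps)
    finally have "(a+1)*e = x*((a+1)*b) + y*((a+1)*g)" .
    then have "m dvd (a+1)*e" using mb mg by simp
    moreover have "(a mod m + 1)*e = (a+1)*e - m*((a div m)*e)"
      by (simp add: minus_div_mult_eq_mod[symmetric] algebra_simps)
    ultimately show "m dvd (a mod m + 1)*e" by simp
  qed
  then show ?thesis by (simp add: e_def g_def)
qed

lemma rep:
  fixes m a b :: int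
  assumes m: "m > 0" and d: "m dvd a*a - 1" "m dvd (a+1)*b"
  shows "(a mod m, gcd b (gcd (a-1) m)) \<in> S m \<and>
    conj_class (Hol m) (aff m a b) = conj_class (Hol m) (aff m (a mod m) (gcd b (gcd (a-1) m)))"
proof
  have c1: "[a*a = 1] (mod m)" using d(1) by (simp add: cong_iff_dvd_diff)
  have c2: "[a*b+b = 0] (mod m)" using d(2) by (simp add: cong_iff_dvd_diff algebra_simps)
  show "(a mod m, gcd b (gcd (a-1) m)) \<in> S m" using rep_in_S[OF m c1 c2] .
  have "coprime a m" using c1 coprime_iff_invertible_int by blast
  then show "conj_class (Hol m) (aff m a b) = conj_class (Hol m) (aff m (a mod m) (gcd b (gcd (a-1) m)))"
    using class_rep[OF m] by blast
qed

abbreviation phi :: "int \<Rightarrow> int \<times> int \<Rightarrow> (int \<Rightarrow> int) set" where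
  "phi m \<equiv> (\<lambda>(a,e). conj_class (Hol m) (aff m a e))"

lemma part1:
  fixes p k :: nat
  assumes p: "prime p" "p > 2" "k \<ge> 1"
  shows "involution_classes (Hol (int p ^ k)) =
           {conj_class (Hol (int p ^ k)) (aff (int p ^ k) 1 0), conj_class (Hol (int p ^ k)) (aff (int p ^ k) (-1) 0)}
         \<and> card (involution_classes (Hol (int p ^ k))) = 2"
proof -
  define m where "m = int p ^ k"
  have q: "prime (int p)" "int p > 2" using p by auto
  have "int p ^ 1 \<le> int p ^ k" using p by (intro power_increasing) auto
  then have "int p \<le> int p ^ k" by (simp only: power_one_right)
  then have m2: "m > 2" using q(2) unfolding m_def by linarith
  have Sm: "S m = {(1,m),(m-1,1)}" unfolding m_def using S_odd[OF q p(3)] .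
  have r1: "conj_class (Hol m) (aff m 1 0) = phi m (1,m)"
    using rep[of m 1 0] m2 by simp
  have r2: "conj_class (Hol m) (aff m (-1) 0) = phi m (m-1,1)"
  proof -
    have mm: "(-1) mod m = m - 1" using m2 by (simp add: zmod_minus1)
    have "((-1) mod m, gcd 0 (gcd (-1-1) m)) \<in> S m \<and>
      conj_class (Hol m) (aff m (-1) 0) = conj_class (Hol m) (aff m ((-1) mod m) (gcd 0 (gcd (-1-1) m)))"
      using m2 by (intro rep) auto
    then have "(m-1, gcd 0 (gcd (-1-1) m)) \<in> S m"
      "conj_class (Hol m) (aff m (-1) 0) = conj_class (Hol m) (aff m (m-1) (gcd 0 (gcd (-1-1) m)))"
      unfolding mm by auto
    moreover have "m - 1 \<noteq> 1" using m2 by simp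
    ultimately show ?thesis unfolding Sm by auto
  qed
  have "involution_classes (Hol m) = phi m ` S m" using classes_eq m2 by simp
  also have "\<dots> = {conj_class (Hol m) (aff m 1 0), conj_class (Hol m) (aff m (-1) 0)}"
    unfolding Sm r1 r2 by simp
  finally have e: "involution_classes (Hol m) = {conj_class (Hol m) (aff m 1 0), conj_class (Hol m) (aff m (-1) 0)}" .
  have "card (involution_classes (Hol m)) = card (S m)" using card_classes m2 by simp
  also have "\<dots> = 2" unfolding Sm using m2 by simp
  finally show ?thesis using e unfolding m_def by simp
qed

lemma part2:
  "involution_classes (Hol 2) = {conj_class (Hol 2) (aff 2 1 0), conj_class (Hol 2) (aff 2 1 1)}
   \<and> card (involution_classes (Hol 2)) = 2"
proof -
  have r1: "conj_class (Hol 2) (aff 2 1 0) = phi 2 (1,2)" using rep[of 2 1 0] by simp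
  have r2: "conj_class (Hol 2) (aff 2 1 1) = phi 2 (1,1)" using rep[of 2 1 1] by simp
  have "involution_classes (Hol 2) = phi 2 ` S 2" using classes_eq by simp
  also have "\<dots> = {conj_class (Hol 2) (aff 2 1 0), conj_class (Hol 2) (aff 2 1 1)}"
    unfolding S_2 r1 r2 by auto
  finally show ?thesis using card_classes[of 2] S_2 by simp
qed

lemma part3:
  "involution_classes (Hol 4) = {conj_class (Hol 4) (aff 4 1 0), conj_class (Hol 4) (aff 4 1 2),
                                conj_class (Hol 4) (aff 4 (-1) 0), conj_class (Hol 4) (aff 4 (-1) 1)}
   \<and> card (involution_classes (Hol 4)) = 4"
proof -
  have r1: "conj_class (Hol 4) (aff 4 1 0) = phi 4 (1,4)" using rep[of 4 1 0] by simp
  have r2: "conj_class (Hol 4) (aff 4 1 2) = phi 4 (1,2)"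
  proof -
    define E :: int where "E = gcd 2 (gcd (1-1) 4)"
    have h: "(1, E) \<in> S 4" "conj_class (Hol 4) (aff 4 1 2) = phi 4 (1,E)"
      using rep[of 4 1 2] by (simp_all add: E_def)
    have "E dvd 2" unfolding E_def by simp
    then have "E \<le> 2" by (simp add: zdvd_imp_le)
    then have "E = 2" using h(1) unfolding S_4 by auto
    then show ?thesis using h(2) by simp
  qed
  have r3: "conj_class (Hol 4) (aff 4 (-1) 0) = phi 4 (3,2)"
  proof -
    define E :: int where "E = gcd 0 (gcd (-1-1) 4)"
    have h: "(3, E) \<in> S 4" "conj_class (Hol 4) (aff 4 (-1) 0) = phi 4 (3,E)"
      using rep[of 4 "-1" 0] by (simp_all add: E_def)
    have "2 dvd E" unfolding E_def by simp
    then have "E = 2" using h(1) unfolding S_4 by auto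
    then show ?thesis using h(2) by simp
  qed
  have r4: "conj_class (Hol 4) (aff 4 (-1) 1) = phi 4 (3,1)" using rep[of 4 "-1" 1] by simp
  have "involution_classes (Hol 4) = phi 4 ` S 4" using classes_eq by simp
  also have "\<dots> = {conj_class (Hol 4) (aff 4 1 0), conj_class (Hol 4) (aff 4 1 2),
                                conj_class (Hol 4) (aff 4 (-1) 0), conj_class (Hol 4) (aff 4 (-1) 1)}"
    unfolding S_4 r1 r2 r3 r4 by auto
  finally show ?thesis using card_classes[of 4] S_4 by simp
qed

lemma part4w:
  fixes w :: int
  assumes w: "w = 2^j" "j \<ge> 1"
  shows "involution_classes (Hol (4*w)) = {conj_class (Hol (4*w)) (aff (4*w) 1 0), conj_class (Hol (4*w)) (aff (4*w) 1 (2*w)),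
                                conj_class (Hol (4*w)) (aff (4*w) (-1) 0), conj_class (Hol (4*w)) (aff (4*w) (-1) 1),
                                conj_class (Hol (4*w)) (aff (4*w) (2*w - 1) 0),
                                conj_class (Hol (4*w)) (aff (4*w) (2*w + 1) 0)}
        \<and> card (involution_classes (Hol (4*w))) = 6"
proof -
  define m where "m = 4*w"
  have "(2::int)^1 \<le> 2^j" by (rule power_increasing) (use w in auto)
  then have w2: "w \<ge> 2" using w by simp
  have m0: "m > 0" using w2 by (simp add: m_def)
  have Sm: "S m = {(1, 2*w), (1, 4*w), (4*w-1, 1), (4*w-1, 2), (2*w+1, 2*w), (2*w-1, 2)}"
    unfolding m_def by (rule S_pow2[OF w])
  have r1: "conj_class (Hol m) (aff m 1 0) = phi m (1,4*w)" using rep[of m 1 0] m0 by (simp add: m_def)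
  have r2: "conj_class (Hol m) (aff m 1 (2*w)) = phi m (1,2*w)"
  proof -
    define E :: int where "E = gcd (2*w) (gcd (1-1) m)"
    have "(1 mod m, E) \<in> S m \<and> conj_class (Hol m) (aff m 1 (2*w)) = conj_class (Hol m) (aff m (1 mod m) E)"
      unfolding E_def using m0 by (intro rep) (auto simp: m_def)
    moreover have "1 mod m = 1" using m0 w2 by (simp add: m_def)
    ultimately have h: "(1, E) \<in> S m" "conj_class (Hol m) (aff m 1 (2*w)) = phi m (1,E)" by auto
    have "E dvd 2*w" unfolding E_def by simp
    then have "E \<le> 2*w" using w2 by (simp add: zdvd_imp_le)
    then have "E = 2*w" using h(1) w2 unfolding Sm by auto
    then show ?thesis using h(2) by simp
  qed
  have mm: "(-1) mod m = 4*w - 1" using m0 by (simp add: zmod_minus1 m_def)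
  have r3: "conj_class (Hol m) (aff m (-1) 0) = phi m (4*w-1,2)"
  proof -
    define E :: int where "E = gcd 0 (gcd (-1-1) m)"
    have "((-1) mod m, E) \<in> S m \<and> conj_class (Hol m) (aff m (-1) 0) = conj_class (Hol m) (aff m ((-1) mod m) E)"
      unfolding E_def using m0 by (intro rep) auto
    then have h: "(4*w-1, E) \<in> S m" "conj_class (Hol m) (aff m (-1) 0) = phi m (4*w-1,E)"
      unfolding mm by auto
    have "2 dvd E" unfolding E_def by (simp add: m_def)
    then have "E = 2" using h(1) w2 unfolding Sm by auto
    then show ?thesis using h(2) by simp
  qed
  have r4: "conj_class (Hol m) (aff m (-1) 1) = phi m (4*w-1,1)"
  proof -
    have "((-1) mod m, gcd 1 (gcd (-1-1) m)) \<in> S m \<and>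
        conj_class (Hol m) (aff m (-1) 1) = conj_class (Hol m) (aff m ((-1) mod m) (gcd 1 (gcd (-1-1) m)))"
      using m0 by (intro rep) auto
    then show ?thesis unfolding mm by simp
  qed
  have r5: "conj_class (Hol m) (aff m (2*w-1) 0) = phi m (2*w-1,2)"
  proof -
    define E :: int where "E = gcd 0 (gcd (2*w-1-1) m)"
    have d: "m dvd (2*w-1)*(2*w-1) - 1"
    proof -
      have "(2*w-1)*(2*w-1) - 1 = m*(w-1)" by (simp add: m_def algebra_simps)
      then show ?thesis by (rule dvd_witness)
    qed
    have "((2*w-1) mod m, E) \<in> S m \<and> conj_class (Hol m) (aff m (2*w-1) 0) = conj_class (Hol m) (aff m ((2*w-1) mod m) E)"
      unfolding E_def using m0 d by (intro rep) auto
    moreover have "(2*w-1) mod m = 2*w-1" using w2 by (simp add: m_def)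
    ultimately have h: "(2*w-1, E) \<in> S m" "conj_class (Hol m) (aff m (2*w-1) 0) = phi m (2*w-1,E)" by auto
    then have "E = 2" using w2 unfolding Sm by auto
    then show ?thesis using h(2) by simp
  qed
  have r6: "conj_class (Hol m) (aff m (2*w+1) 0) = phi m (2*w+1,2*w)"
  proof -
    define E :: int where "E = gcd 0 (gcd (2*w+1-1) m)"
    have d: "m dvd (2*w+1)*(2*w+1) - 1"
    proof -
      have "(2*w+1)*(2*w+1) - 1 = m*(w+1)" by (simp add: m_def algebra_simps)
      then show ?thesis by (rule dvd_witness)
    qed
    have "((2*w+1) mod m, E) \<in> S m \<and> conj_class (Hol m) (aff m (2*w+1) 0) = conj_class (Hol m) (aff m ((2*w+1) mod m) E)"
      unfolding E_def using m0 d by (intro rep) auto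
    moreover have "(2*w+1) mod m = 2*w+1" using w2 by (simp add: m_def)
    ultimately have h: "(2*w+1, E) \<in> S m" "conj_class (Hol m) (aff m (2*w+1) 0) = phi m (2*w+1,E)" by auto
    then have "E = 2*w" using w2 unfolding Sm by auto
    then show ?thesis using h(2) by simp
  qed
  have "involution_classes (Hol m) = phi m ` S m" using classes_eq m0 by simp
  also have "\<dots> = {conj_class (Hol m) (aff m 1 0), conj_class (Hol m) (aff m 1 (2*w)),
                                conj_class (Hol m) (aff m (-1) 0), conj_class (Hol m) (aff m (-1) 1),
                                conj_class (Hol m) (aff m (2*w - 1) 0),
                                conj_class (Hol m) (aff m (2*w + 1) 0)}"
    unfolding Sm r1 r2 r3 r4 r5 r6 by auto
  finally have e: "involution_classes (Hol m) = {conj_class (Hol m) (aff m 1 0), conj_class (Hol m) (aff m 1 (2*w)),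
                                conj_class (Hol m) (aff m (-1) 0), conj_class (Hol m) (aff m (-1) 1),
                                conj_class (Hol m) (aff m (2*w - 1) 0),
                                conj_class (Hol m) (aff m (2*w + 1) 0)}" .
  have "card (involution_classes (Hol m)) = card (S m)" using card_classes m0 by simp
  also have "\<dots> = 6" unfolding Sm using w2 by simp
  finally show ?thesis using e unfolding m_def by simp
qed

theorem lemma5p3:
  shows
  "(\<forall>(p::nat) (k::nat). prime p \<and> p > 2 \<and> k \<ge> 1 \<longrightarrow>
      (let m = int p ^ k; G = Hol m in
        involution_classes G = {conj_class G (aff m 1 0), conj_class G (aff m (-1) 0)}
        \<and> card (involution_classes G) = 2))
   \<and> (let m = 2; G = Hol m in
        involution_classes G = {conj_class G (aff m 1 0), conj_class G (aff m 1 1)}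
        \<and> card (involution_classes G) = 2)
   \<and> (let m = 4; G = Hol m in
        involution_classes G = {conj_class G (aff m 1 0), conj_class G (aff m 1 2),
                                conj_class G (aff m (-1) 0), conj_class G (aff m (-1) 1)}
        \<and> card (involution_classes G) = 4)
   \<and> (\<forall>k::nat. k \<ge> 3 \<longrightarrow>
      (let m = 2 ^ k; G = Hol m in
        involution_classes G = {conj_class G (aff m 1 0), conj_class G (aff m 1 (2 ^ (k - 1))),
                                conj_class G (aff m (-1) 0), conj_class G (aff m (-1) 1),
                                conj_class G (aff m (2 ^ (k - 1) - 1) 0),
                                conj_class G (aff m (2 ^ (k - 1) + 1) 0)}
        \<and> card (involution_classes G) = 6))
   \<and> (\<forall>m::nat. m > 0 \<longrightarrow>
      card (involution_classes (Hol (int m))) =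
        min 6 (2 ^ multiplicity 2 m) * 2 ^ card {p. prime p \<and> p > 2 \<and> p dvd m})"
proof (intro conjI allI impI)
  fix p k :: nat
  assume pk: "prime p \<and> p > 2 \<and> k \<ge> 1"
  show "let m = int p ^ k; G = Hol m in
        involution_classes G = {conj_class G (aff m 1 0), conj_class G (aff m (-1) 0)}
        \<and> card (involution_classes G) = 2"
    unfolding Let_def using part1[of p k] pk by blast
next
  show "let m = 2; G = Hol m in
        involution_classes G = {conj_class G (aff m 1 0), conj_class G (aff m 1 1)}
        \<and> card (involution_classes G) = 2"
    unfolding Let_def by (rule part2)
next
  show "let m = 4; G = Hol m in
        involution_classes G = {conj_class G (aff m 1 0), conj_class G (aff m 1 2),
                                conj_class G (aff m (-1) 0), conj_class G (aff m (-1) 1)}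
        \<and> card (involution_classes G) = 4"
    unfolding Let_def by (rule part3)
next
  fix k :: nat
  assume k: "k \<ge> 3"
  have e1: "(2::int)^k = 4 * 2^(k-2)"
  proof -
    have "k = 2 + (k-2)" using k by simp
    then have "(2::int)^k = 2^(2 + (k-2))" by (rule arg_cong)
    also have "\<dots> = 4 * 2^(k-2)" by (simp add: power_add)
    finally show ?thesis .
  qed
  have e2: "(2::int)^(k-1) = 2 * 2^(k-2)"
  proof -
    have "k-1 = 1 + (k-2)" using k by simp
    then have "(2::int)^(k-1) = 2^(1 + (k-2))" by (rule arg_cong)
    also have "\<dots> = 2 * 2^(k-2)" by (simp add: power_add)
    finally show ?thesis .
  qed
  have j: "k - 2 \<ge> 1" using k by simp
  show "let m = 2 ^ k; G = Hol m in
        involution_classes G = {conj_class G (aff m 1 0), conj_class G (aff m 1 (2 ^ (k - 1))),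
                                conj_class G (aff m (-1) 0), conj_class G (aff m (-1) 1),
                                conj_class G (aff m (2 ^ (k - 1) - 1) 0),
                                conj_class G (aff m (2 ^ (k - 1) + 1) 0)}
        \<and> card (involution_classes G) = 6"
    unfolding Let_def e1 e2 by (rule part4w[OF refl j])
next
  fix m :: nat
  assume m: "m > 0"
  show "card (involution_classes (Hol (int m))) =
        min 6 (2 ^ multiplicity 2 m) * 2 ^ card {p. prime p \<and> p > 2 \<and> p dvd m}"
    using card_classes[of "int m"] card_S_formula[OF m] m by (simp add: OP_def)
qed


end
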